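(* Let $p$ be a prime, and let $U,V$ be unitary operators on a finite-dimensional complex Hilbert space with $U^p=V^p=I$. Suppose $UV=\zeta VU$ for some $p$th root of unity $\zeta\ne1$. Then $\|P_UP_V\|_{\mathrm{op}}\le p^{-1/2}$, where $P_U=\frac1p\sum_{a=0}^{p-1}U^a$ and $P_V=\frac1p\sum_{a=0}^{p-1}V^a$.
   Context: $P_U$ is the orthogonal projection onto the fixed space of $U$; $\|\cdot\|_{\mathrm{op}}$ is the operator norm. *)

theory Defs
  imports "HOL-Analysis.Analysis"
begin

text \<open>Operators on the finite-dimensional complex Hilbert space complex^'n
  (standard inner product) are represented by square complex matrices.\<close>

definition ctrans :: "complex^'n^'m \<Rightarrow> complex^'m^'n" where
  "ctrans A = (\<chi> i j. cnj (A $ j $ i))"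

definition unitary_mat :: "complex^'n^'n \<Rightarrow> bool" where
  "unitary_mat U \<longleftrightarrow> U ** ctrans U = mat 1 \<and> ctrans U ** U = mat 1"

primrec mpow :: "complex^'n^'n \<Rightarrow> nat \<Rightarrow> complex^'n^'n" where
  "mpow A 0 = mat 1"
| "mpow A (Suc k) = A ** mpow A k"

definition mscale :: "complex \<Rightarrow> complex^'n^'m \<Rightarrow> complex^'n^'m" where
  "mscale c A = (\<chi> i j. c * A $ i $ j)"

definition avg_proj :: "nat \<Rightarrow> complex^'n^'n \<Rightarrow> complex^'n^'n" where
  "avg_proj p U = mscale (1 / of_nat p) (\<Sum>a<p. mpow U a)"

definition op_norm :: "complex^'n^'m \<Rightarrow> real" where
  "op_norm A = onorm (\<lambda>x. A *v x)"

end

theory Submission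
  imports Defs
begin

definition herm :: "complex^'n \<Rightarrow> complex^'n \<Rightarrow> complex" where
  "herm x y = (\<Sum>i\<in>UNIV. cnj (x$i) * y$i)"

lemma mv_scale: "mscale c A *v x = c *s (A *v x)"
  by (simp add: mscale_def matrix_vector_mult_def vec_eq_iff sum_distrib_left mult.assoc)

lemma mv_smult: "(A::complex^'n^'m) *v (c *s x) = c *s (A *v x)"
  by (simp add: matrix_vector_mult_def vec_eq_iff sum_distrib_left mult.left_commute)

lemma mv_sum: "(\<Sum>a\<in>S. f a) *v x = (\<Sum>a\<in>S. f a *v x)"
  by (induction S rule: infinite_finite_induct) (auto simp: matrix_vector_mult_add_rdistrib)

lemma mv_sumvec: "A *v (\<Sum>a\<in>S. f a) = (\<Sum>a\<in>S. A *v f a)"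
  by (induction S rule: infinite_finite_induct) (auto simp: matrix_vector_right_distrib)

lemma mpow_Suc_mv: "mpow A (Suc k) *v x = A *v (mpow A k *v x)"
  by (simp add: matrix_vector_mul_assoc)

lemma herm_adj: "herm ((A::complex^'n^'m) *v x) y = herm x (ctrans A *v y)"
proof -
  have "herm (A *v x) y = (\<Sum>i\<in>UNIV. \<Sum>j\<in>UNIV. cnj (A$i$j) * cnj (x$j) * y$i)"
    unfolding herm_def matrix_vector_mult_def
    by (simp add: sum_distrib_right)
  also have "\<dots> = (\<Sum>j\<in>UNIV. \<Sum>i\<in>UNIV. cnj (A$i$j) * cnj (x$j) * y$i)"
    by (rule sum.swap)
  also have "\<dots> = herm x (ctrans A *v y)"
    unfolding herm_def matrix_vector_mult_def ctrans_def
    by (simp add: sum_distrib_left mult_ac)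
  finally show ?thesis .
qed

lemma herm_unitary:
  assumes "ctrans A ** A = mat 1"
  shows "herm (A *v x) (A *v y) = herm x y"
  by (simp add: herm_adj matrix_vector_mul_assoc assms)

lemma herm_scale_l: "herm (c *s x) y = cnj c * herm x y"
  by (simp add: herm_def sum_distrib_left mult_ac)

lemma herm_scale_r: "herm x (c *s y) = c * herm x y"
  by (simp add: herm_def sum_distrib_left mult_ac)

lemma herm_sum_l: "herm (\<Sum>a\<in>S. f a) y = (\<Sum>a\<in>S. herm (f a) y)"
  by (induction S rule: infinite_finite_induct)
     (auto simp: herm_def sum.distrib distrib_right)

lemma herm_sum_r: "herm x (\<Sum>a\<in>S. f a) = (\<Sum>a\<in>S. herm x (f a))"
  by (induction S rule: infinite_finite_induct)
     (auto simp: herm_def sum.distrib distrib_left)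

lemma herm_self: "herm x x = complex_of_real ((norm x)^2)"
proof -
  have "(norm x)^2 = (\<Sum>i\<in>UNIV. (norm (x$i))^2)"
    unfolding norm_vec_def L2_set_def
    by (simp add: sum_nonneg)
  then have "complex_of_real ((norm x)^2) = (\<Sum>i\<in>UNIV. complex_of_real ((norm (x$i))^2))"
    by simp
  also have "\<dots> = (\<Sum>i\<in>UNIV. cnj (x$i) * x$i)"
    by (simp only: complex_norm_square mult.commute)
  finally show ?thesis unfolding herm_def by simp
qed

lemma mpow_unitary:
  assumes "ctrans A ** A = mat 1"
  shows "herm (mpow A k *v x) (mpow A k *v x) = herm x x"
  by (induction k) (simp_all add: matrix_vector_mul_assoc[symmetric] herm_unitary assms)

lemma zeta_distinct:
  fixes z :: complex
  assumes "prime p" "z ^ p = 1" "z \<noteq> 1" "a < p" "b < p" "a < b"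
  shows "z ^ a \<noteq> z ^ b"
proof
  assume eq: "z ^ a = z ^ b"
  have z0: "z \<noteq> 0" using assms prime_gt_0_nat by (metis power_0_left less_irrefl_nat zero_neq_one)
  define d where "d = b - a"
  have "z ^ b = z ^ a * z ^ d" unfolding d_def using assms by (simp add: power_add[symmetric])
  with eq z0 have zd: "z ^ d = 1" by simp
  have d0: "d \<noteq> 0" "d < p" using assms unfolding d_def by auto
  have "\<not> p dvd d" using d0 by (auto dest: dvd_imp_le)
  then have "coprime p d" using assms(1) by (simp add: prime_imp_coprime)
  then have "coprime d p" by (simp add: coprime_commute)
  then have g: "gcd d p = 1" by simp
  obtain x y where xy: "d * x = p * y + gcd d p" using bezout_nat[OF d0(1)] by blast
  have "z ^ (d*x) = 1" by (simp add: power_mult zd)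
  moreover have "z ^ (d*x) = z ^ (p*y) * z" using xy g by (simp add: power_add)
  ultimately have "z = 1" by (simp add: power_mult assms(2))
  with assms show False by simp
qed

lemma norm_smult_c: "norm (c *s (v::complex^'n)) = norm c * norm v"
proof -
  have cc: "c * cnj c = (complex_of_real (cmod c))^2" by (metis complex_norm_square of_real_power)
  have "complex_of_real ((norm (c *s v))^2) = complex_of_real ((norm c * norm v)^2)"
    unfolding herm_self[symmetric] herm_scale_l herm_scale_r
    by (simp add: herm_self power_mult_distrib cc mult_ac)
  then have "(norm (c *s v))^2 = (norm c * norm v)^2" by (simp only: of_real_eq_iff)
  then show ?thesis by (simp add: power2_eq_iff_nonneg)
qed

lemma norm_unitary_pow:
  assumes "ctrans A ** A = mat 1"
  shows "norm (mpow A k *v x) = norm x"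
proof -
  have "complex_of_real ((norm (mpow A k *v x))^2) = complex_of_real ((norm x)^2)"
    using mpow_unitary[OF assms] by (simp add: herm_self)
  then have "(norm (mpow A k *v x))^2 = (norm x)^2" by (simp only: of_real_eq_iff)
  then show ?thesis by (simp add: power2_eq_iff_nonneg)
qed

lemma comm_pow:
  assumes "U ** V = mscale z (V ** U)"
  shows "mpow U a *v (V *v y) = z ^ a *s (V *v (mpow U a *v y))"
proof (induction a arbitrary: y)
  case 0
  then show ?case by simp
next
  case (Suc a)
  have "mpow U (Suc a) *v (V *v y) = U *v (mpow U a *v (V *v y))" by (rule mpow_Suc_mv)
  also have "\<dots> = z ^ a *s (U *v (V *v (mpow U a *v y)))" by (simp add: Suc mv_smult)
  also have "U *v (V *v (mpow U a *v y)) = z *s (V *v (U *v (mpow U a *v y)))"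
    by (metis matrix_vector_mul_assoc assms mv_scale)
  also have "U *v (mpow U a *v y) = mpow U (Suc a) *v y" by (rule mpow_Suc_mv[symmetric])
  finally show ?case by (simp add: vector_smult_assoc mult.commute)
qed

theorem lemma4p12:
  fixes U V :: "complex^'n^'n" and p :: nat and \<zeta> :: complex
  assumes "prime p"
    and "unitary_mat U" and "unitary_mat V"
    and "mpow U p = mat 1" and "mpow V p = mat 1"
    and "\<zeta> ^ p = 1" and "\<zeta> \<noteq> 1"
    and "U ** V = mscale \<zeta> (V ** U)"
  shows "op_norm (avg_proj p U ** avg_proj p V) \<le> 1 / sqrt (real p)"
proof -
  have p0: "p > 0" using assms(1) prime_gt_0_nat by blast
  have uU: "ctrans U ** U = mat 1" and uV: "ctrans V ** V = mat 1"
    using assms(2,3) unfolding unitary_mat_def by auto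
  have nz: "norm \<zeta> = 1"
  proof -
    have "norm \<zeta> ^ p = 1 ^ p" using assms(6) by (metis norm_one norm_power power_one)
    then show ?thesis using power_eq_imp_eq_base[of "norm \<zeta>" p 1] p0 by simp
  qed
  have zc: "\<zeta> * cnj \<zeta> = 1" using complex_norm_square[of \<zeta>] nz by simp
  have unitpow: "\<zeta> ^ a * cnj (\<zeta> ^ a) = 1" for a
    by (simp add: power_mult_distrib[symmetric] zc)
  show ?thesis
    unfolding op_norm_def
  proof (rule onorm_le)
    fix x :: "complex^'n"
    define w where "w = avg_proj p V *v x"
    have w_eq: "w = (1 / of_nat p) *s (\<Sum>a<p. mpow V a *v x)"
      unfolding w_def avg_proj_def by (simp add: mv_scale mv_sum)
    have Vw: "V *v w = w"
    proof -
      obtain m where m: "p = Suc m" using p0 by (cases p) auto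
      have "(\<Sum>a<p. V *v (mpow V a *v x)) = (\<Sum>a<p. mpow V (Suc a) *v x)"
        by (simp only: mpow_Suc_mv)
      also have "\<dots> = (\<Sum>a<p. mpow V a *v x)"
      proof -
        let ?g = "\<lambda>a. mpow V a *v x"
        have e1: "(\<Sum>a<Suc m. ?g a) = ?g 0 + (\<Sum>a<m. ?g (Suc a))" by (rule sum.lessThan_Suc_shift)
        have e2: "(\<Sum>a<Suc m. ?g (Suc a)) = (\<Sum>a<m. ?g (Suc a)) + ?g (Suc m)" by (rule sum.lessThan_Suc)
        have e3: "?g (Suc m) = ?g 0" using assms(5) m by simp
        show ?thesis unfolding m using e1 e2 e3 by (simp only: add.commute)
      qed
      finally show ?thesis unfolding w_eq by (simp add: mv_smult mv_sumvec)
    qed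
    have nw: "norm w \<le> norm x"
    proof -
      have "norm (\<Sum>a<p. mpow V a *v x) \<le> (\<Sum>a<p. norm (mpow V a *v x))"
        by (rule norm_sum)
      also have "\<dots> = real p * norm x" by (simp add: norm_unitary_pow[OF uV])
      finally have "norm (\<Sum>a<p. mpow V a *v x) \<le> real p * norm x" .
      moreover have "norm w = norm (\<Sum>a<p. mpow V a *v x) / real p"
        unfolding w_eq by (simp add: norm_smult_c norm_divide)
      ultimately show ?thesis using p0 by (simp add: divide_le_eq mult.commute)
    qed
    define u where "u a = mpow U a *v w" for a
    have ueig: "u a = \<zeta> ^ a *s (V *v u a)" for a
      using comm_pow[OF assms(8), of a w] Vw unfolding u_def by simp
    have orth: "herm (u a) (u b) = 0" if "a < p" "b < p" "a \<noteq> b" for a b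
    proof (rule ccontr)
      assume h: "herm (u a) (u b) \<noteq> 0"
      have "herm (u a) (u b) = herm (\<zeta> ^ a *s (V *v u a)) (\<zeta> ^ b *s (V *v u b))"
        using ueig[of a] ueig[of b] by simp
      also have "\<dots> = cnj (\<zeta> ^ a) * \<zeta> ^ b * herm (u a) (u b)"
        by (simp add: herm_scale_l herm_scale_r herm_unitary[OF uV])
      finally have c1: "cnj (\<zeta> ^ a) * \<zeta> ^ b = 1" using h by simp
      have "\<zeta> ^ b = \<zeta> ^ a * cnj (\<zeta> ^ a) * \<zeta> ^ b" by (simp only: unitpow mult_1_left)
      also have "\<dots> = \<zeta> ^ a * (cnj (\<zeta> ^ a) * \<zeta> ^ b)" by (simp only: mult.assoc)
      also have "\<dots> = \<zeta> ^ a" by (simp only: c1 mult_1_right)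
      finally have "\<zeta> ^ b = \<zeta> ^ a" .
      moreover have "\<zeta> ^ a \<noteq> \<zeta> ^ b"
      proof (cases "a < b")
        case True
        then show ?thesis using zeta_distinct[OF assms(1,6,7)] that by blast
      next
        case False
        then have "b < a" using that by simp
        then show ?thesis using zeta_distinct[OF assms(1,6,7), of b a] that by auto
      qed
      ultimately show False by simp
    qed
    define S where "S = (\<Sum>a<p. u a)"
    have hS: "herm S S = of_nat p * herm w w"
    proof -
      have "herm S S = (\<Sum>a<p. \<Sum>b<p. herm (u a) (u b))"
        unfolding S_def by (simp only: herm_sum_l herm_sum_r, rule sum.swap)
      also have "\<dots> = (\<Sum>a<p. herm (u a) (u a))"
      proof (rule sum.cong[OF refl])
        fix a assume a: "a \<in> {..<p}"
        have "(\<Sum>b<p. herm (u a) (u b)) = (\<Sum>b<p. if b = a then herm (u a) (u a) else 0)"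
          using orth a by (intro sum.cong) auto
        also have "\<dots> = herm (u a) (u a)" using a by (simp add: sum.delta')
        finally show "(\<Sum>b<p. herm (u a) (u b)) = herm (u a) (u a)" .
      qed
      also have "\<dots> = (\<Sum>a<p. herm w w)"
        unfolding u_def by (simp add: mpow_unitary[OF uU])
      finally show ?thesis by simp
    qed
    have PUw: "avg_proj p U *v w = (1 / of_nat p) *s S"
      unfolding avg_proj_def S_def u_def by (simp add: mv_scale mv_sum)
    have "complex_of_real ((norm (avg_proj p U *v w))^2)
        = complex_of_real ((norm w)^2 / real p)"
      unfolding herm_self[symmetric] PUw herm_scale_l herm_scale_r hS
      using p0 by (simp add: herm_self power2_eq_square field_simps)
    then have n2: "(norm (avg_proj p U *v w))^2 = (norm w)^2 / real p"
      by (simp only: of_real_eq_iff)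
    also have "\<dots> \<le> (norm x)^2 / real p"
      using nw p0 by (simp add: divide_right_mono power_mono)
    also have "\<dots> = (1 / sqrt (real p) * norm x)^2"
      using p0 by (simp add: power_mult_distrib power_divide)
    finally have "(norm (avg_proj p U *v w))^2 \<le> (1 / sqrt (real p) * norm x)^2" .
    then have "norm (avg_proj p U *v w) \<le> 1 / sqrt (real p) * norm x"
      by (rule power2_le_imp_le) simp
    then show "norm ((avg_proj p U ** avg_proj p V) *v x) \<le> 1 / sqrt (real p) * norm x"
      unfolding w_def by (simp add: matrix_vector_mul_assoc[symmetric])
  qed
qed

end
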